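(* For every digraph $X$, the Redei–Berge polynomial $u_X(m)$ is a polynomial in $m$ with integer coefficients.
   Context: A digraph $X=(V,E)$: $V$ finite, $E\subset\{(u,v)\in V\times V\mid u\ne v\}$. $\Sigma_V$ is the set of bijections $\sigma:[n]\to V$ ($n=|V|$), $X\mathrm{Des}(\sigma)=\{i\in[n-1]\mid(\sigma_i,\sigma_{i+1})\in E\}$; $F_I=\sum x_{i_1}\cdots x_{i_n}$ over $1\le i_1\le\cdots\le i_n$ with $i_j<i_{j+1}$ for $j\in I$; $U_X=\sum_{\sigma\in\Sigma_V}F_{X\mathrm{Des}(\sigma)}$; $u_X(m)$ is the principal specialization $U_X(1,\dots,1,0,\dots)$ ($m$ ones), a polynomial in $m$ (a priori with rational coefficients). *)

theory Defs
  imports "HOL-Computational_Algebra.Polynomial" "HOL-Library.FuncSet"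
begin

definition digraph :: "'a set \<Rightarrow> ('a \<times> 'a) set \<Rightarrow> bool" where
  "digraph V E \<longleftrightarrow> finite V \<and> E \<subseteq> {(u, v). u \<in> V \<and> v \<in> V \<and> u \<noteq> v}"

definition Sigma_V :: "'a set \<Rightarrow> (nat \<Rightarrow> 'a) set" where
  "Sigma_V V = {\<sigma>. \<sigma> \<in> {1..card V} \<rightarrow>\<^sub>E V \<and> bij_betw \<sigma> {1..card V} V}"

definition XDes :: "('a \<times> 'a) set \<Rightarrow> nat \<Rightarrow> (nat \<Rightarrow> 'a) \<Rightarrow> nat set" where
  "XDes E n \<sigma> = {i \<in> {1..n-1}. (\<sigma> i, \<sigma> (Suc i)) \<in> E}"

text \<open>Principal specialization F_I(1,...,1,0,...) (m ones) of the fundamental quasisymmetric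
  function F_I of degree n: the number of monomials x_{i_1}...x_{i_n} with
  1 <= i_1 <= ... <= i_n <= m and i_j < i_{j+1} for j in I.  Sequences are encoded as
  functions nat => nat that are 0 outside [n].\<close>
definition F_spec :: "nat \<Rightarrow> nat set \<Rightarrow> nat \<Rightarrow> nat" where
  "F_spec n I m = card {i :: nat \<Rightarrow> nat.
      (\<forall>j\<in>{1..n}. 1 \<le> i j \<and> i j \<le> m) \<and>
      (\<forall>j\<in>{1..<n}. i j \<le> i (Suc j)) \<and>
      (\<forall>j\<in>I. i j < i (Suc j)) \<and>
      (\<forall>j. j \<notin> {1..n} \<longrightarrow> i j = 0)}"

text \<open>u_X(m) = U_X(1^m) = sum over sigma in Sigma_V of F_{XDes(sigma)}(1^m).\<close>
definition redei_berge_u :: "'a set \<Rightarrow> ('a \<times> 'a) set \<Rightarrow> nat \<Rightarrow> nat" where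
  "redei_berge_u V E m = (\<Sum>\<sigma>\<in>Sigma_V V. F_spec (card V) (XDes E (card V) \<sigma>) m)"

end

theory Submission
  imports Defs
begin


definition NoDes :: "('a \<times> 'a) set \<Rightarrow> 'a set \<Rightarrow> (nat \<Rightarrow> 'a) set" where
  "NoDes E T = {\<sigma>\<in>Sigma_V T. XDes E (card T) \<sigma> = {}}"

definition hh :: "('a \<times> 'a) set \<Rightarrow> 'a set \<Rightarrow> nat" where
  "hh E T = card (NoDes E T)"

definition GG :: "('a \<times> 'a) set \<Rightarrow> 'a set \<Rightarrow> 'b set \<Rightarrow> nat" where
  "GG E S C = (\<Sum>f\<in>S \<rightarrow>\<^sub>E C. \<Prod>c\<in>C. hh E {v\<in>S. f v = c})"

lemma core:
  assumes "finite S" "finite C" "c \<notin> C"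
  shows "(\<Sum>f\<in>{f\<in>S \<rightarrow>\<^sub>E insert c C. P {v\<in>S. f v = c}}. \<Prod>c'\<in>insert c C. hh E {v\<in>S. f v = c'})
       = (\<Sum>T\<in>{T. T\<subseteq>S \<and> P T}. hh E T * GG E (S-T) C)"
proof -
  define mg where "mg = (\<lambda>(T::'a set, g::'a\<Rightarrow>'b). (\<lambda>v. if v \<in> T then c else g v))"
  define A where "A = (SIGMA T:{T. T\<subseteq>S \<and> P T}. (S-T) \<rightarrow>\<^sub>E C)"
  have finA: "finite {T. T\<subseteq>S \<and> P T}" using assms(1) by simp
  have "(\<Sum>T\<in>{T. T\<subseteq>S \<and> P T}. hh E T * GG E (S-T) C)
     = (\<Sum>T\<in>{T. T\<subseteq>S \<and> P T}. \<Sum>g\<in>(S-T) \<rightarrow>\<^sub>E C. hh E T * (\<Prod>c'\<in>C. hh E {v\<in>S-T. g v = c'}))"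
    by (simp add: GG_def sum_distrib_left)
  also have "\<dots> = (\<Sum>(T,g)\<in>A. hh E T * (\<Prod>c'\<in>C. hh E {v\<in>S-T. g v = c'}))"
    unfolding A_def
    by (rule sum.Sigma[OF finA]) (auto intro!: finite_PiE assms)
  also have "\<dots> = (\<Sum>x\<in>A. (\<lambda>f. \<Prod>c'\<in>insert c C. hh E {v\<in>S. f v = c'}) (mg x))"
  proof (rule sum.cong[OF refl])
    fix x assume "x \<in> A"
    then obtain T g where x: "x = (T,g)" "T \<subseteq> S" "g \<in> (S-T) \<rightarrow>\<^sub>E C" unfolding A_def by auto
    have f1: "{v\<in>S. mg x v = c} = T" using x assms(3) by (auto simp: mg_def PiE_def Pi_def)
    have f2: "c' \<in> C \<Longrightarrow> {v\<in>S. mg x v = c'} = {v\<in>S-T. g v = c'}" for c'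
      using x assms(3) by (auto simp: mg_def)
    show "(case x of (T, g) \<Rightarrow> hh E T * (\<Prod>c'\<in>C. hh E {v \<in> S - T. g v = c'})) =
         (\<Prod>c'\<in>insert c C. hh E {v \<in> S. mg x v = c'})"
      using assms f1 f2 x(1) by (simp add: prod.insert)
  qed
  also have "\<dots> = (\<Sum>f\<in>{f\<in>S \<rightarrow>\<^sub>E insert c C. P {v\<in>S. f v = c}}. \<Prod>c'\<in>insert c C. hh E {v\<in>S. f v = c'})"
  proof (rule sum.reindex_bij_betw)
    show "bij_betw mg A {f\<in>S \<rightarrow>\<^sub>E insert c C. P {v\<in>S. f v = c}}"
      unfolding bij_betw_def
    proof
      show "inj_on mg A"
      proof (rule inj_onI)
        fix x y assume xy: "x \<in> A" "y \<in> A" "mg x = mg y"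
        obtain T g where x: "x = (T,g)" "T \<subseteq> S" "g \<in> (S-T) \<rightarrow>\<^sub>E C" using xy(1) unfolding A_def by auto
        obtain T' g' where y: "y = (T',g')" "T' \<subseteq> S" "g' \<in> (S-T') \<rightarrow>\<^sub>E C" using xy(2) unfolding A_def by auto
        have "T = {v\<in>S. mg x v = c}" using x assms(3) by (auto simp: mg_def PiE_def Pi_def)
        moreover have "T' = {v\<in>S. mg y v = c}" using y assms(3) by (auto simp: mg_def PiE_def Pi_def)
        ultimately have TT: "T = T'" using xy(3) by simp
        have "g = g'"
        proof
          fix v
          show "g v = g' v"
          proof (cases "v \<in> S - T")
            case True
            then have "mg x v = g v" "mg y v = g' v" using x y TT by (auto simp: mg_def)
            then show ?thesis using xy(3) by simp
          next
            case False
            then show ?thesis using x(3) y(3) TT by (auto simp: PiE_def extensional_def)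
          qed
        qed
        then show "x = y" using x y TT by simp
      qed
    next
      show "mg ` A = {f\<in>S \<rightarrow>\<^sub>E insert c C. P {v\<in>S. f v = c}}"
      proof
        show "mg ` A \<subseteq> {f\<in>S \<rightarrow>\<^sub>E insert c C. P {v\<in>S. f v = c}}"
        proof
          fix f assume "f \<in> mg ` A"
          then obtain T g where x: "f = mg (T,g)" "T \<subseteq> S" "P T" "g \<in> (S-T) \<rightarrow>\<^sub>E C" unfolding A_def by auto
          have "{v\<in>S. f v = c} = T" using x assms(3) by (auto simp: mg_def PiE_def Pi_def)
          moreover have "f \<in> S \<rightarrow>\<^sub>E insert c C" using x by (auto simp: mg_def PiE_def Pi_def extensional_def)
          ultimately show "f \<in> {f\<in>S \<rightarrow>\<^sub>E insert c C. P {v\<in>S. f v = c}}" using x by simp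
        qed
      next
        show "{f\<in>S \<rightarrow>\<^sub>E insert c C. P {v\<in>S. f v = c}} \<subseteq> mg ` A"
        proof
          fix f assume f: "f \<in> {f\<in>S \<rightarrow>\<^sub>E insert c C. P {v\<in>S. f v = c}}"
          define T where "T = {v\<in>S. f v = c}"
          define g where "g = restrict f (S-T)"
          have "(T,g) \<in> A" using f unfolding A_def T_def g_def by (auto simp: PiE_def Pi_def)
          moreover have "mg (T,g) = f"
          proof
            fix v show "mg (T,g) v = f v"
              using f unfolding mg_def T_def g_def by (auto simp: PiE_def extensional_def)
          qed
          ultimately show "f \<in> mg ` A" by (metis image_eqI)
        qed
      qed
    qed
  qed
  finally show ?thesis by simp
qed


lemma GG_rec:
  assumes "finite S" "finite C" "c \<notin> C"
  shows "GG E S (insert c C) = (\<Sum>T\<in>Pow S. hh E T * GG E (S-T) C)"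
  using core[OF assms, where P="\<lambda>_. True" and E=E] by (simp add: GG_def Pow_def)

lemma GG_x:
  assumes "finite S" "finite C" "x \<in> S"
  shows "GG E S C = (\<Sum>c\<in>C. \<Sum>T\<in>{T. T\<subseteq>S \<and> x\<in>T}. hh E T * GG E (S-T) (C-{c}))"
proof -
  let ?F = "\<lambda>f. \<Prod>c\<in>C. hh E {v\<in>S. f v = c}"
  have fin: "finite (S \<rightarrow>\<^sub>E C)" using assms by (simp add: finite_PiE)
  have "GG E S C = (\<Sum>f\<in>S \<rightarrow>\<^sub>E C. \<Sum>c\<in>C. if f x = c then ?F f else 0)"
    unfolding GG_def
  proof (rule sum.cong[OF refl])
    fix f assume "f \<in> S \<rightarrow>\<^sub>E C"
    then have "f x \<in> C" using assms(3) by auto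
    then show "?F f = (\<Sum>c\<in>C. if f x = c then ?F f else 0)"
      using assms(2) by (simp add: sum.delta)
  qed
  also have "\<dots> = (\<Sum>c\<in>C. \<Sum>f\<in>S \<rightarrow>\<^sub>E C. if f x = c then ?F f else 0)"
    by (rule sum.swap)
  also have "\<dots> = (\<Sum>c\<in>C. \<Sum>f\<in>{f\<in>S \<rightarrow>\<^sub>E C. f x = c}. ?F f)"
    by (simp add: sum.inter_filter[OF fin])
  also have "\<dots> = (\<Sum>c\<in>C. \<Sum>T\<in>{T. T\<subseteq>S \<and> x\<in>T}. hh E T * GG E (S-T) (C-{c}))"
  proof (rule sum.cong[OF refl])
    fix c assume c: "c \<in> C"
    have CC: "C = insert c (C-{c})" using c by auto
    have "(\<Sum>f\<in>{f\<in>S \<rightarrow>\<^sub>E insert c (C-{c}). x \<in> {v\<in>S. f v = c}}. \<Prod>c'\<in>insert c (C-{c}). hh E {v\<in>S. f v = c'})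
       = (\<Sum>T\<in>{T. T\<subseteq>S \<and> x\<in>T}. hh E T * GG E (S-T) (C-{c}))"
      by (rule core) (use assms in auto)
    moreover have "{f\<in>S \<rightarrow>\<^sub>E insert c (C-{c}). x \<in> {v\<in>S. f v = c}} = {f\<in>S \<rightarrow>\<^sub>E C. f x = c}"
      using assms(3) CC by auto
    ultimately show "(\<Sum>f\<in>{f\<in>S \<rightarrow>\<^sub>E C. f x = c}. ?F f) = (\<Sum>T\<in>{T. T\<subseteq>S \<and> x\<in>T}. hh E T * GG E (S-T) (C-{c}))"
      using CC by metis
  qed
  finally show ?thesis .
qed

lemma hh_empty: "hh E {} = 1"
proof -
  have "Sigma_V {} = {\<lambda>_. undefined}"
    by (auto simp: Sigma_V_def bij_betw_def)
  moreover have "XDes E 0 \<sigma> = {}" for \<sigma> by (simp add: XDes_def)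
  ultimately have "NoDes E {} = {\<lambda>_. undefined}" by (auto simp: NoDes_def)
  then show ?thesis by (simp add: hh_def)
qed

lemma GG_empty: "GG E {} C = 1"
  by (simp add: GG_def hh_empty)

lemma GG_poly:
  assumes "finite S"
  shows "\<exists>p::int poly. \<forall>C::'b set. finite C \<longrightarrow> int (GG E S C) = poly p (int (card C))"
  using assms
proof (induction "card S" arbitrary: S rule: less_induct)
  case less
  show ?case
  proof (cases "S = {}")
    case True
    then show ?thesis by (intro exI[of _ 1]) (simp add: GG_empty)
  next
    case False
    then obtain x where x: "x \<in> S" by auto
    define TT where "TT = {T. T\<subseteq>S \<and> x\<in>T}"
    have "\<forall>T\<in>TT. \<exists>p::int poly. \<forall>C::'b set. finite C \<longrightarrow> int (GG E (S-T) C) = poly p (int (card C))"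
    proof
      fix T assume "T \<in> TT"
      then have "card (S-T) < card S" using x less.prems unfolding TT_def
        by (intro psubset_card_mono) auto
      then show "\<exists>p::int poly. \<forall>C::'b set. finite C \<longrightarrow> int (GG E (S-T) C) = poly p (int (card C))"
        using less.hyps less.prems by auto
    qed
    then obtain P where P: "\<And>T C. T \<in> TT \<Longrightarrow> finite (C::'b set) \<Longrightarrow> int (GG E (S-T) C) = poly (P T) (int (card C))"
      by metis
    define q where "q = [:0,1:] * (\<Sum>T\<in>TT. smult (int (hh E T)) (pcompose (P T) [:-1,1:]))"
    show ?thesis
    proof (intro exI[of _ q] allI impI)
      fix C :: "'b set" assume C: "finite C"
      have "int (GG E S C) = (\<Sum>c\<in>C. \<Sum>T\<in>TT. int (hh E T) * int (GG E (S-T) (C-{c})))"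
        unfolding GG_x[OF less.prems C x] TT_def by simp
      also have "\<dots> = (\<Sum>c\<in>C. \<Sum>T\<in>TT. int (hh E T) * poly (P T) (int (card C) - 1))"
      proof (intro sum.cong refl)
        fix c T assume c: "c \<in> C" and T: "T \<in> TT"
        have "int (card (C-{c})) = int (card C) - 1" using c C
        proof -
          have "card C \<ge> 1" using c C by (metis One_nat_def Suc_leI card_gt_0_iff empty_iff)
          then show ?thesis using c C by (simp add: card_Diff_singleton of_nat_diff)
        qed
        then show "int (hh E T) * int (GG E (S-T) (C-{c})) = int (hh E T) * poly (P T) (int (card C) - 1)"
          using P[OF T] C by simp
      qed
      also have "\<dots> = int (card C) * (\<Sum>T\<in>TT. int (hh E T) * poly (P T) (int (card C) - 1))"
        by simp
      also have "\<dots> = poly q (int (card C))"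
        by (simp add: q_def poly_sum poly_pcompose)
      finally show "int (GG E S C) = poly q (int (card C))" .
    qed
  qed
qed



definition Fset :: "nat \<Rightarrow> nat set \<Rightarrow> nat \<Rightarrow> (nat \<Rightarrow> nat) set" where
  "Fset n I m = {i :: nat \<Rightarrow> nat.
      (\<forall>j\<in>{1..n}. 1 \<le> i j \<and> i j \<le> m) \<and>
      (\<forall>j\<in>{1..<n}. i j \<le> i (Suc j)) \<and>
      (\<forall>j\<in>I. i j < i (Suc j)) \<and>
      (\<forall>j. j \<notin> {1..n} \<longrightarrow> i j = 0)}"

lemma F_spec_Fset: "F_spec n I m = card (Fset n I m)"
  by (simp add: F_spec_def Fset_def)

definition Pairs :: "('a \<times> 'a) set \<Rightarrow> 'a set \<Rightarrow> nat \<Rightarrow> ((nat \<Rightarrow> 'a) \<times> (nat \<Rightarrow> nat)) set" where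
  "Pairs E V m = (SIGMA \<sigma>:Sigma_V V. Fset (card V) (XDes E (card V) \<sigma>) m)"

lemma finite_Fset: "finite (Fset n I m)"
proof -
  let ?g = "\<lambda>i::nat\<Rightarrow>nat. map i [0..<Suc n]"
  have "inj_on ?g (Fset n I m)"
  proof (rule inj_onI)
    fix i i' assume ii: "i \<in> Fset n I m" "i' \<in> Fset n I m" "?g i = ?g i'"
    show "i = i'"
    proof
      fix j show "i j = i' j"
      proof (cases "j \<le> n")
        case True
        then have "j < length [0..<Suc n]" by simp
        have "\<forall>x\<in>set [0..<Suc n]. i x = i' x" using ii(3) by (metis map_eq_conv)
        then show ?thesis using True by (simp del: upt_Suc)
      next
        case False
        then show ?thesis using ii(1,2) by (simp add: Fset_def)
      qed
    qed
  qed
  moreover have "?g ` Fset n I m \<subseteq> {xs. set xs \<subseteq> {0..m} \<and> length xs = Suc n}"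
  proof
    fix xs assume "xs \<in> ?g ` Fset n I m"
    then obtain i where i: "i \<in> Fset n I m" "xs = ?g i" by auto
    have "i j \<le> m" for j
      using i(1) unfolding Fset_def
      by (cases "j \<in> {1..n}") auto
    then show "xs \<in> {xs. set xs \<subseteq> {0..m} \<and> length xs = Suc n}" using i(2) by auto
  qed
  then have "finite (?g ` Fset n I m)"
    by (rule finite_subset) (rule finite_lists_length_eq, simp)
  ultimately show ?thesis using finite_imageD by blast
qed

lemma finite_Sigma_V: "finite V \<Longrightarrow> finite (Sigma_V V)"
  unfolding Sigma_V_def
  by (rule finite_subset[of _ "{1..card V} \<rightarrow>\<^sub>E V"]) (auto intro: finite_PiE)

lemma u_Pairs: "finite V \<Longrightarrow> redei_berge_u V E m = card (Pairs E V m)"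
  unfolding redei_berge_u_def Pairs_def F_spec_Fset
  by (simp add: card_SigmaI finite_Sigma_V finite_Fset)

lemma Pairs_0: "card (Pairs E V 0) = (if V = {} then 1 else 0)"
proof (cases "V = {}")
  case True
  have "Sigma_V {} = {\<lambda>_. undefined}"
    by (auto simp: Sigma_V_def bij_betw_def)
  moreover have "Fset 0 {} 0 = {\<lambda>_. 0}"
    by (auto simp: Fset_def)
  moreover have "XDes E 0 \<sigma> = {}" for \<sigma> by (simp add: XDes_def)
  ultimately have "Pairs E {} 0 = {(\<lambda>_. undefined, \<lambda>_. 0)}" unfolding Pairs_def by auto
  then show ?thesis using True by simp
next
  case False
  then have "card V \<noteq> 0 \<or> infinite V" by auto
  show ?thesis
  proof (cases "finite V")
    case True
    then have "card V \<ge> 1" using False by (simp add: Suc_le_eq card_gt_0_iff)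
    then have "Fset (card V) I 0 = {}" for I
      by (force simp: Fset_def)
    then show ?thesis using False by (simp add: Pairs_def)
  next
    case inf: False
    have "Sigma_V V = {}"
    proof (rule ccontr)
      assume "Sigma_V V \<noteq> {}"
      then obtain \<sigma> where "bij_betw \<sigma> {1..card V} V" by (auto simp: Sigma_V_def)
      then have "finite V" using bij_betw_finite by blast
      then show False using inf by simp
    qed
    then show ?thesis using False by (simp add: Pairs_def)
  qed
qed

lemma GG_emptyC: "GG E V {} = (if V = {} then 1 else 0)"
  proof (cases "V = {}")
  case False
  then have "V \<rightarrow>\<^sub>E ({}::'b set) = {}" by (auto simp: PiE_eq_empty_iff)
  then show ?thesis using False by (simp add: GG_def)
qed (simp add: GG_def)


lemma mono_seq:
  assumes "\<forall>j\<in>{1..<n}. i j \<le> i (Suc j)" "1 \<le> j" "j \<le> k" "k \<le> n"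
  shows "(i j :: nat) \<le> i k"
  using assms(3,4)
proof (induction k)
  case 0 then show ?case by simp
next
  case (Suc k)
  show ?case
  proof (cases "j = Suc k")
    case False
    then have "j \<le> k" using Suc.prems by simp
    then have "i j \<le> i k" using Suc by simp
    also have "i k \<le> i (Suc k)" using assms(1,2) \<open>j \<le> k\<close> Suc.prems by auto
    finally show ?thesis .
  qed simp
qed

lemma split_point:
  fixes i :: "nat \<Rightarrow> nat" and m n :: nat
  assumes "\<forall>j\<in>{1..<n}. i j \<le> i (Suc j)"
  defines "a \<equiv> card {j\<in>{1..n}. (i j::nat) \<le> m}"
  shows "a \<le> n" "\<And>j. j \<in> {1..n} \<Longrightarrow> i j \<le> m \<longleftrightarrow> j \<le> a"
proof -
  let ?D = "{j\<in>{1..n}. i j \<le> m}"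
  have "?D \<subseteq> {1..n}" by auto
  then show "a \<le> n" unfolding a_def using card_mono[of "{1..n}" ?D] by simp
  fix j assume j: "j \<in> {1..n}"
  show "i j \<le> m \<longleftrightarrow> j \<le> a"
  proof
    assume "i j \<le> m"
    have "{1..j} \<subseteq> ?D"
    proof
      fix x assume x: "x \<in> {1..j}"
      then have "i x \<le> i j" using j mono_seq[OF assms(1), of x j] by auto
      then show "x \<in> ?D" using x j \<open>i j \<le> m\<close> by auto
    qed
    then show "j \<le> a" unfolding a_def using card_mono[of ?D "{1..j}"] by simp
  next
    assume ja: "j \<le> a"
    show "i j \<le> m"
    proof (rule ccontr)
      assume "\<not> i j \<le> m"
      then have "?D \<subseteq> {1..<j}" using j mono_seq[OF assms(1)]
        by (auto simp: not_le) (meson le_trans not_le)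
      then have "a \<le> j - 1" unfolding a_def using card_mono[of "{1..<j}" ?D] by simp
      then show False using ja j by auto
    qed
  qed
qed

lemma bij_shift: fixes a b :: nat shows "bij_betw (\<lambda>j. s (j - a)) {a+1..a+b} B \<longleftrightarrow> bij_betw s {1..b} B"
proof -
  have "bij_betw (\<lambda>j. j - a) {a+1..a+b} {1..b}"
    by (rule bij_betw_byWitness[where f'="\<lambda>j. j + a"]) auto
  then show ?thesis
    using bij_betw_comp_iff[of "\<lambda>j. j - a" "{a+1..a+b}" "{1..b}" s B] by (simp add: comp_def)
qed

lemma glue_bij:
  fixes a b :: nat
  assumes "bij_betw s1 {1..a} A" "bij_betw s2 {1..b} B" "A \<inter> B = {}"
  shows "bij_betw (\<lambda>j. if j \<le> a then s1 j else s2 (j-a)) {1..a+b} (A \<union> B)"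
proof -
  let ?g = "\<lambda>j. if j \<le> a then s1 j else s2 (j-a)"
  have 1: "bij_betw ?g {1..a} A"
    using assms(1) by (rule bij_betw_cong[THEN iffD1, rotated]) auto
  have "bij_betw (\<lambda>j. s2 (j - a)) {a+1..a+b} B" using assms(2) bij_shift by blast
  then have 2: "bij_betw ?g {a+1..a+b} B"
    by (rule bij_betw_cong[THEN iffD1, rotated]) auto
  have "bij_betw ?g ({1..a} \<union> {a+1..a+b}) (A \<union> B)"
    by (rule bij_betw_combine[OF 1 2 assms(3)])
  moreover have "{1..a} \<union> {a+1..a+b} = {1..a+b}" by auto
  ultimately show ?thesis by simp
qed

definition glue :: "'a set \<Rightarrow> 'a set \<Rightarrow> nat \<Rightarrow> (nat \<Rightarrow> 'a) \<Rightarrow> (nat \<Rightarrow> 'a) \<Rightarrow> (nat \<Rightarrow> nat)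
   \<Rightarrow> (nat \<Rightarrow> 'a) \<times> (nat \<Rightarrow> nat)" where
  "glue V T m \<sigma>2 \<sigma>1 i1 = ((\<lambda>j. if j \<le> card (V-T) then \<sigma>1 j else \<sigma>2 (j - card (V-T))),
     (\<lambda>j. if j \<le> card (V-T) then i1 j else if j \<le> card V then Suc m else 0))"


lemma card_split:
  assumes "finite V" "T \<subseteq> V"
  shows "card V = card (V-T) + card T"
  using assms by (metis card_Diff_subset card_mono finite_subset le_add_diff_inverse2)

lemma glue_mem:
  assumes V: "finite V" and T: "T \<subseteq> V" and s2: "\<sigma>2 \<in> NoDes E T"
    and s1: "(\<sigma>1, i1) \<in> Pairs E (V-T) m"
  shows "glue V T m \<sigma>2 \<sigma>1 i1 \<in> Pairs E V (Suc m)"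
proof -
  define a where "a = card (V-T)"
  define b where "b = card T"
  define n where "n = card V"
  have n: "n = a + b" unfolding a_def b_def n_def using card_split[OF V T] .
  define \<sigma> where "\<sigma> = (\<lambda>j. if j \<le> a then \<sigma>1 j else \<sigma>2 (j - a))"
  define i where "i = (\<lambda>j. if j \<le> a then i1 j else if j \<le> n then Suc m else (0::nat))"
  have g: "glue V T m \<sigma>2 \<sigma>1 i1 = (\<sigma>, i)" unfolding glue_def \<sigma>_def i_def a_def n_def by simp
  have s1E: "\<sigma>1 \<in> {1..a} \<rightarrow>\<^sub>E V-T" and s1b: "bij_betw \<sigma>1 {1..a} (V-T)"
    using s1 unfolding Pairs_def Sigma_V_def a_def by auto
  have i1F: "i1 \<in> Fset a (XDes E a \<sigma>1) m" using s1 unfolding Pairs_def a_def by auto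
  have s2E: "\<sigma>2 \<in> {1..b} \<rightarrow>\<^sub>E T" and s2b: "bij_betw \<sigma>2 {1..b} T"
    and s2d: "XDes E b \<sigma>2 = {}"
    using s2 unfolding NoDes_def Sigma_V_def b_def by auto
  have sb: "bij_betw \<sigma> {1..n} V"
  proof -
    have "bij_betw \<sigma> {1..a+b} ((V-T) \<union> T)"
      unfolding \<sigma>_def by (rule glue_bij[OF s1b s2b]) auto
    moreover have "(V-T) \<union> T = V" using T by auto
    ultimately show ?thesis using n by simp
  qed
  have sE: "\<sigma> \<in> {1..n} \<rightarrow>\<^sub>E V"
  proof (rule PiE_I)
    fix j assume "j \<in> {1..n}"
    then show "\<sigma> j \<in> V" using sb bij_betwE by blast
  next
    fix j assume j: "j \<notin> {1..n}"
    show "\<sigma> j = undefined"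
    proof (cases "j \<le> a")
      case True
      then have "j \<notin> {1..a}" using j n by auto
      then show ?thesis using s1E True by (simp add: \<sigma>_def PiE_def extensional_def)
    next
      case False
      then have "j - a \<notin> {1..b}" using j n by auto
      then show ?thesis using s2E False by (simp add: \<sigma>_def PiE_def extensional_def)
    qed
  qed
  have iF: "i \<in> Fset n (XDes E n \<sigma>) (Suc m)"
    unfolding Fset_def
  proof (intro CollectI conjI ballI allI impI)
    fix j assume "j \<in> {1..n}"
    then show "1 \<le> i j" using i1F
      by (auto simp: i_def Fset_def)
  next
    fix j assume "j \<in> {1..n}"
    then show "i j \<le> Suc m" using i1F
      by (auto simp: i_def Fset_def intro: le_SucI)
  next
    fix j assume j: "j \<in> {1..<n}"
    show "i j \<le> i (Suc j)"
    proof (cases "Suc j \<le> a")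
      case True
      then show ?thesis using i1F j by (auto simp: i_def Fset_def)
    next
      case False
      show ?thesis
      proof (cases "j \<le> a")
        case True
        then have "j \<in> {1..a}" using j by auto
        then have "i1 j \<le> m" using i1F by (auto simp: Fset_def)
        then show ?thesis using True False j by (auto simp: i_def)
      qed (use False j in \<open>auto simp: i_def\<close>)
    qed
  next
    fix j assume j: "j \<in> XDes E n \<sigma>"
    then have j1: "j \<in> {1..n-1}" and je: "(\<sigma> j, \<sigma> (Suc j)) \<in> E" by (auto simp: XDes_def)
    show "i j < i (Suc j)"
    proof (cases "Suc j \<le> a")
      case True
      then have "j \<in> XDes E a \<sigma>1" using j1 je by (auto simp: XDes_def \<sigma>_def)
      then show ?thesis using i1F True by (auto simp: i_def Fset_def)
    next
      case False
      show ?thesis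
      proof (cases "j \<le> a")
        case True
        then have "j \<in> {1..a}" using j1 by auto
        then have "i1 j \<le> m" using i1F by (auto simp: Fset_def)
        then show ?thesis using True False j1 by (auto simp: i_def)
      next
        case False2: False
        then have "j - a \<in> {1..b-1}" "Suc j - a = Suc (j - a)" using j1 n by auto
        moreover have "(\<sigma>2 (j-a), \<sigma>2 (Suc (j-a))) \<in> E"
          using je False2 \<open>Suc j - a = Suc (j - a)\<close> by (simp add: \<sigma>_def)
        ultimately have "j - a \<in> XDes E b \<sigma>2" by (simp add: XDes_def)
        then show ?thesis using s2d by simp
      qed
    qed
  next
    fix j assume j: "j \<notin> {1..n}"
    then show "i j = 0" using i1F n by (auto simp: i_def Fset_def)
  qed
  show ?thesis unfolding g Pairs_def Sigma_V_def n_def[symmetric]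
    using sE sb iF by auto
qed




lemma glue_surj:
  assumes V: "finite V" and P: "(\<sigma>, i) \<in> Pairs E V (Suc m)"
  shows "\<exists>T \<sigma>2 \<sigma>1 i1. T \<subseteq> V \<and> \<sigma>2 \<in> NoDes E T \<and> (\<sigma>1, i1) \<in> Pairs E (V-T) m
     \<and> glue V T m \<sigma>2 \<sigma>1 i1 = (\<sigma>, i)"
proof -
  define n where "n = card V"
  have sE: "\<sigma> \<in> {1..n} \<rightarrow>\<^sub>E V" and sb: "bij_betw \<sigma> {1..n} V"
    and iF: "i \<in> Fset n (XDes E n \<sigma>) (Suc m)"
    using P unfolding Pairs_def Sigma_V_def n_def by auto
  have mono: "\<forall>j\<in>{1..<n}. i j \<le> i (Suc j)" using iF by (simp add: Fset_def)
  define a where "a = card {j\<in>{1..n}. i j \<le> m}"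
  have an: "a \<le> n" and K: "\<And>j. j \<in> {1..n} \<Longrightarrow> i j \<le> m \<longleftrightarrow> j \<le> a"
    using split_point[OF mono] unfolding a_def by auto
  have ibnd: "\<And>j. j \<in> {1..n} \<Longrightarrow> 1 \<le> i j \<and> i j \<le> Suc m" using iF by (simp add: Fset_def)
  have itop: "\<And>j. j \<in> {1..n} \<Longrightarrow> a < j \<Longrightarrow> i j = Suc m"
    using K ibnd by (meson le_SucE not_le)
  have i0: "\<And>j. j \<notin> {1..n} \<Longrightarrow> i j = 0" using iF by (simp add: Fset_def)
  have sU: "\<And>j. j \<notin> {1..n} \<Longrightarrow> \<sigma> j = undefined" using sE by (simp add: PiE_def extensional_def)
  define T where "T = \<sigma> ` {a+1..n}"
  define \<sigma>1 where "\<sigma>1 = (\<lambda>j. if j \<in> {1..a} then \<sigma> j else undefined)"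
  define i1 where "i1 = (\<lambda>j. if j \<in> {1..a} then i j else 0)"
  define \<sigma>2 where "\<sigma>2 = (\<lambda>j. if j \<in> {1..n-a} then \<sigma> (j+a) else undefined)"
  have inj: "inj_on \<sigma> {1..n}" using bij_betw_imp_inj_on[OF sb] .
  have img: "\<sigma> ` {1..n} = V" using bij_betw_imp_surj_on[OF sb] .
  have split: "{1..n} = {1..a} \<union> {a+1..n}" using an by auto
  have TV: "T \<subseteq> V" unfolding T_def using img by auto
  have VT: "V - T = \<sigma> ` {1..a}"
  proof -
    have "\<sigma> ` {1..a} \<inter> T = \<sigma> ` ({1..a} \<inter> {a+1..n})" unfolding T_def
      using inj_on_image_Int[OF inj, of "{1..a}" "{a+1..n}"] an by auto
    then have "\<sigma> ` {1..a} \<inter> T = {}" by simp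
    moreover have "\<sigma> ` {1..a} \<union> T = V" unfolding T_def using img split by auto
    ultimately show ?thesis by auto
  qed
  have cVT: "card (V - T) = a"
    unfolding VT using inj split by (simp add: card_image inj_on_subset)
  have cT: "card T = n - a" using card_split[OF V TV] cVT n_def by simp
  have s1b: "bij_betw \<sigma>1 {1..a} (V-T)"
  proof -
    have "bij_betw \<sigma> {1..a} (\<sigma> ` {1..a})" using inj split by (simp add: bij_betw_def inj_on_subset)
    then show ?thesis unfolding VT by (rule bij_betw_cong[THEN iffD1, rotated]) (simp add: \<sigma>1_def)
  qed
  have s1E: "\<sigma>1 \<in> {1..a} \<rightarrow>\<^sub>E V-T"
    using s1b unfolding \<sigma>1_def by (auto simp: PiE_def extensional_def bij_betw_def)
  have s2b: "bij_betw \<sigma>2 {1..n-a} T"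
  proof -
    have b1: "bij_betw (\<lambda>j. j + a) {1..n-a} {a+1..n}"
      by (rule bij_betw_byWitness[where f'="\<lambda>j. j - a"]) (use an in auto)
    have b2: "bij_betw \<sigma> {a+1..n} T" unfolding T_def using inj split
      by (simp add: bij_betw_def inj_on_subset)
    have "bij_betw (\<sigma> \<circ> (\<lambda>j. j + a)) {1..n-a} T" using bij_betw_trans[OF b1 b2] .
    then show ?thesis by (rule bij_betw_cong[THEN iffD1, rotated]) (simp add: \<sigma>2_def)
  qed
  have s2E: "\<sigma>2 \<in> {1..n-a} \<rightarrow>\<^sub>E T"
    using s2b unfolding \<sigma>2_def by (auto simp: PiE_def extensional_def bij_betw_def)
  have s2d: "XDes E (n-a) \<sigma>2 = {}"
  proof (rule ccontr)
    assume "XDes E (n-a) \<sigma>2 \<noteq> {}"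
    then obtain j where j: "j \<in> {1..n-a-1}" "(\<sigma>2 j, \<sigma>2 (Suc j)) \<in> E" by (auto simp: XDes_def)
    moreover have "j \<le> n - a" "Suc j \<le> n - a" using j(1) by auto
    ultimately have "(\<sigma> (j+a), \<sigma> (Suc (j+a))) \<in> E" by (simp add: \<sigma>2_def)
    then have "j + a \<in> XDes E n \<sigma>" using j(1) by (auto simp: XDes_def)
    then have "i (j+a) < i (Suc (j+a))" using iF by (auto simp: Fset_def)
    moreover have "i (j+a) = Suc m" "i (Suc (j+a)) = Suc m" using itop j(1) by auto
    ultimately show False by simp
  qed
  have i1F: "i1 \<in> Fset a (XDes E a \<sigma>1) m"
    unfolding Fset_def
  proof (intro CollectI conjI ballI allI impI)
    fix j assume "j \<in> {1..a}"
    then show "1 \<le> i1 j" using ibnd an by (auto simp: i1_def)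
  next
    fix j assume "j \<in> {1..a}"
    then show "i1 j \<le> m" using K an by (auto simp: i1_def)
  next
    fix j assume "j \<in> {1..<a}"
    then show "i1 j \<le> i1 (Suc j)" using mono an by (auto simp: i1_def)
  next
    fix j assume j: "j \<in> XDes E a \<sigma>1"
    then have j1: "j \<in> {1..a-1}" "(\<sigma>1 j, \<sigma>1 (Suc j)) \<in> E" by (auto simp: XDes_def)
    then have "j \<le> a" "Suc j \<le> a" by auto
    then have "(\<sigma> j, \<sigma> (Suc j)) \<in> E" using j1 by (simp add: \<sigma>1_def)
    then have "j \<in> XDes E n \<sigma>" using an j1 by (auto simp: XDes_def)
    then show "i1 j < i1 (Suc j)" using iF j by (auto simp: Fset_def i1_def XDes_def)
  next
    fix j assume "j \<notin> {1..a}"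
    then show "i1 j = 0" unfolding i1_def by presburger
  qed
  have g1: "(if j \<le> a then \<sigma>1 j else \<sigma>2 (j - a)) = \<sigma> j" for j
    using an sU by (auto simp: \<sigma>1_def \<sigma>2_def)
  have g2: "(if j \<le> a then i1 j else if j \<le> n then Suc m else 0) = i j" for j
    using an i0 itop by (auto simp: i1_def)
  have g: "glue V T m \<sigma>2 \<sigma>1 i1 = (\<sigma>, i)"
    unfolding glue_def cVT n_def[symmetric] using g1 g2 by auto
  show ?thesis
  proof (intro exI conjI)
    show "T \<subseteq> V" by (rule TV)
    show "\<sigma>2 \<in> NoDes E T" unfolding NoDes_def Sigma_V_def cT using s2E s2b s2d by auto
    show "(\<sigma>1, i1) \<in> Pairs E (V-T) m" unfolding Pairs_def Sigma_V_def cVT using s1E s1b i1F by auto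
    show "glue V T m \<sigma>2 \<sigma>1 i1 = (\<sigma>, i)" by (rule g)
  qed
qed


lemma glue_facts:
  assumes V: "finite V" and T: "T \<subseteq> V" and s2: "\<sigma>2 \<in> NoDes E T"
    and s1: "(\<sigma>1, i1) \<in> Pairs E (V-T) m"
    and g: "glue V T m \<sigma>2 \<sigma>1 i1 = (\<sigma>, i)"
  shows "{j\<in>{1..card V}. i j \<le> m} = {1..card (V-T)}"
    "\<sigma> ` {1..card (V-T)} = V - T"
    "\<And>j. j \<in> {1..card (V-T)} \<Longrightarrow> \<sigma> j = \<sigma>1 j \<and> i j = i1 j"
    "\<And>j. j \<in> {1..card T} \<Longrightarrow> \<sigma> (j + card (V-T)) = \<sigma>2 j"
proof -
  define a where "a = card (V-T)"
  have n: "card V = a + card T" unfolding a_def using card_split[OF V T] .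
  have sE: "\<sigma> = (\<lambda>j. if j \<le> a then \<sigma>1 j else \<sigma>2 (j - a))"
    and iE: "i = (\<lambda>j. if j \<le> a then i1 j else if j \<le> card V then Suc m else 0)"
    using g unfolding glue_def a_def by auto
  have s1b: "bij_betw \<sigma>1 {1..a} (V-T)"
    using s1 unfolding Pairs_def Sigma_V_def a_def by auto
  have i1F: "i1 \<in> Fset a (XDes E a \<sigma>1) m" using s1 unfolding Pairs_def a_def by auto
  show "{j\<in>{1..card V}. i j \<le> m} = {1..a}"
    using i1F n unfolding iE by (auto simp: Fset_def)
  show "\<And>j. j \<in> {1..a} \<Longrightarrow> \<sigma> j = \<sigma>1 j \<and> i j = i1 j" unfolding sE iE by auto
  then have "\<sigma> ` {1..a} = \<sigma>1 ` {1..a}" by (auto intro: image_cong)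
  then show "\<sigma> ` {1..a} = V - T" using s1b by (simp add: bij_betw_def)
  show "\<And>j. j \<in> {1..card T} \<Longrightarrow> \<sigma> (j + a) = \<sigma>2 j" unfolding sE by auto
qed

lemma glue_inj:
  assumes V: "finite V" and T: "T \<subseteq> V" and s2: "\<sigma>2 \<in> NoDes E T"
    and s1: "(\<sigma>1, i1) \<in> Pairs E (V-T) m"
    and T': "T' \<subseteq> V" and s2': "\<sigma>2' \<in> NoDes E T'"
    and s1': "(\<sigma>1', i1') \<in> Pairs E (V-T') m"
    and eq: "glue V T m \<sigma>2 \<sigma>1 i1 = glue V T' m \<sigma>2' \<sigma>1' i1'"
  shows "T = T' \<and> \<sigma>2 = \<sigma>2' \<and> \<sigma>1 = \<sigma>1' \<and> i1 = i1'"
proof -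
  obtain \<sigma> i where g: "glue V T m \<sigma>2 \<sigma>1 i1 = (\<sigma>, i)" by (cases "glue V T m \<sigma>2 \<sigma>1 i1") auto
  note F = glue_facts[OF V T s2 s1 g]
  note F' = glue_facts[OF V T' s2' s1' eq[unfolded g, symmetric]]
  have "card (V-T) = card (V-T')"
    using F(1) F'(1) by (metis card_atLeastAtMost diff_Suc_1)
  then have VT: "V - T = V - T'" using F(2) F'(2) by simp
  then have TT: "T = T'" using T T' by auto
  have a: "card (V-T) = card (V-T')" using VT by simp
  have s1E: "\<sigma>1 \<in> extensional {1..card (V-T)}" "\<sigma>1' \<in> extensional {1..card (V-T')}"
    using s1 s1' unfolding Pairs_def Sigma_V_def by (auto simp: PiE_def)
  have s2E: "\<sigma>2 \<in> extensional {1..card T}" "\<sigma>2' \<in> extensional {1..card T'}"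
    using s2 s2' unfolding NoDes_def Sigma_V_def by (auto simp: PiE_def)
  have i1E: "\<forall>j. j \<notin> {1..card (V-T)} \<longrightarrow> i1 j = 0" "\<forall>j. j \<notin> {1..card (V-T')} \<longrightarrow> i1' j = 0"
    using s1 s1' unfolding Pairs_def by (auto simp: Fset_def)
  have "\<sigma>1 = \<sigma>1'"
  proof
    fix j show "\<sigma>1 j = \<sigma>1' j"
      using F(3)[of j] F'(3)[of j] s1E a by (cases "j \<in> {1..card (V-T)}") (auto simp: extensional_def)
  qed
  moreover have "i1 = i1'"
  proof
    fix j show "i1 j = i1' j"
      using F(3)[of j] F'(3)[of j] i1E a by (cases "j \<in> {1..card (V-T)}") auto
  qed
  moreover have "\<sigma>2 = \<sigma>2'"
  proof
    fix j show "\<sigma>2 j = \<sigma>2' j"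
      using F(4)[of j] F'(4)[of j] s2E a TT by (cases "j \<in> {1..card T}") (auto simp: extensional_def)
  qed
  ultimately show ?thesis using TT by simp
qed

lemma Pairs_rec:
  assumes V: "finite V"
  shows "card (Pairs E V (Suc m)) = (\<Sum>T\<in>Pow V. hh E T * card (Pairs E (V-T) m))"
proof -
  define D where "D = (SIGMA T:Pow V. NoDes E T \<times> Pairs E (V-T) m)"
  define \<Phi> where "\<Phi> = (\<lambda>(T, \<sigma>2, (\<sigma>1, i1)). glue V T m \<sigma>2 \<sigma>1 i1)"
  have finP: "finite (Pairs E W k)" if "finite W" for W k
    unfolding Pairs_def using that by (auto intro!: finite_SigmaI finite_Sigma_V finite_Fset)
  have finN: "finite (NoDes E W)" if "finite W" for W
    unfolding NoDes_def using finite_Sigma_V[OF that] by simp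
  have "card D = (\<Sum>T\<in>Pow V. hh E T * card (Pairs E (V-T) m))"
    unfolding D_def using V
    by (subst card_SigmaI) (auto simp: hh_def card_cartesian_product intro!: finP finN
        intro: finite_subset)
  moreover have "bij_betw \<Phi> D (Pairs E V (Suc m))"
    unfolding bij_betw_def
  proof
    show "inj_on \<Phi> D"
    proof (rule inj_onI)
      fix x y assume x: "x \<in> D" and y: "y \<in> D" and e: "\<Phi> x = \<Phi> y"
      obtain T s2 s1 i1 where xx: "x = (T, s2, s1, i1)" by (cases x) auto
      obtain T' s2' s1' i1' where yy: "y = (T', s2', s1', i1')" by (cases y) auto
      have m1: "T \<subseteq> V" "s2 \<in> NoDes E T" "(s1, i1) \<in> Pairs E (V-T) m"
        using x unfolding xx D_def by auto
      have m2: "T' \<subseteq> V" "s2' \<in> NoDes E T'" "(s1', i1') \<in> Pairs E (V-T') m"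
        using y unfolding yy D_def by auto
      have e': "glue V T m s2 s1 i1 = glue V T' m s2' s1' i1'" using e unfolding xx yy \<Phi>_def by simp
      show "x = y"
        using glue_inj[OF V m1 m2 e'] unfolding xx yy by simp
    qed
  next
    show "\<Phi> ` D = Pairs E V (Suc m)"
    proof
      show "\<Phi> ` D \<subseteq> Pairs E V (Suc m)"
        unfolding D_def \<Phi>_def using glue_mem[OF V] by auto
    next
      show "Pairs E V (Suc m) \<subseteq> \<Phi> ` D"
      proof
        fix p assume p: "p \<in> Pairs E V (Suc m)"
        obtain \<sigma> i where pp: "p = (\<sigma>, i)" by (cases p) auto
        obtain T s2 s1 i1 where "T \<subseteq> V" "s2 \<in> NoDes E T" "(s1, i1) \<in> Pairs E (V-T) m"
          "glue V T m s2 s1 i1 = (\<sigma>, i)"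
          using glue_surj[OF V p[unfolded pp]] by blast
        then show "p \<in> \<Phi> ` D" unfolding pp D_def \<Phi>_def
          by (auto intro!: image_eqI[of _ _ "(T, s2, s1, i1)"])
      qed
    qed
  qed
  ultimately show ?thesis using bij_betw_same_card by metis
qed

lemma u_GG: "finite V \<Longrightarrow> card (Pairs E V m) = GG E V {1..m}"
proof (induction m arbitrary: V)
  case 0
  then show ?case by (simp add: Pairs_0 GG_emptyC)
next
  case (Suc m)
  have "GG E V {1..Suc m} = GG E V (insert (Suc m) {1..m})"
    by (simp add: atLeastAtMostSuc_conv)
  also have "\<dots> = (\<Sum>T\<in>Pow V. hh E T * GG E (V-T) {1..m})"
    using Suc.prems by (simp add: GG_rec)
  also have "\<dots> = (\<Sum>T\<in>Pow V. hh E T * card (Pairs E (V-T) m))"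
    using Suc.IH Suc.prems by simp
  finally show ?case using Pairs_rec[OF Suc.prems] by simp
qed

theorem mainTheorem14:
  fixes V :: "'a set" and E :: "('a \<times> 'a) set"
  assumes "digraph V E"
  shows "\<exists>p :: int poly. \<forall>m :: nat. int (redei_berge_u V E m) = poly p (int m)"
proof -
  have V: "finite V" using assms by (simp add: digraph_def)
  obtain p :: "int poly" where p: "\<And>C::nat set. finite C \<Longrightarrow> int (GG E V C) = poly p (int (card C))"
    using GG_poly[OF V, where 'b=nat] by blast
  show ?thesis
  proof (intro exI allI)
    fix m
    show "int (redei_berge_u V E m) = poly p (int m)"
      using p[of "{1..m}"] by (simp add: u_Pairs[OF V] u_GG[OF V])
  qed
qed


end
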